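(* Let $G=(V,E)$ be a finite graph, $f$ a weight function of one of the two types described in the context (with associated integer $k$), $g(S)=f(S)/|S|$, $\epsilon\ge 0$, and let $S^*$ be a nonempty vertex set maximizing $g$ over nonempty subsets of $V$. Run the local-peeling-optimization algorithm described in the context, and let $u_i$ be the first vertex of $S^*$ that the algorithm removes. Then $u_i$ is not removed during a local trimming step (i.e., it is not in any set $U_2$); it is removed in a main peeling step (in some set $U_1$).
   Context: Let $G=(V,E)$ be a graph; $E[S]$ denotes the edges with both endpoints in $S$. The weight function $f$ is either (Type A, $k=2$) $f(S)=\sum_{u_i\in S}a_i+\sum_{(u_i,u_j)\in E[S]}c_{ij}$ with fixed $a_i\ge 0$, $c_{ij}\ge 0$, or (Type B, $k\ge3$) $f(S)=$ number of $k$-cliques in the induced subgraph $G[S]$. The density is $g(S)=f(S)/|S|$ for nonempty $S$, and the peeling weight of $u\in S$ is $w_u(S)=f(S)-f(S\setminus\{u\})$. Local-peeling-optimization algorithm with parameter $\epsilon\ge0$: set $S_0=V$, $\tau_{\max}=0$, $i=1$. While $S_{i-1}\neq\emptyset$: (1) set $\tau_{\max}\leftarrow\max\{\tau_{\max}, g(S_{i-1})/(k(1+\epsilon))\}$ and $\tau_1=\max\{\tau_{\max},k(1+\epsilon)g(S_{i-1})\}$; (2) main peeling step: $U_1=\{u\in S_{i-1}: w_u(S_{i-1})\le\tau_1\}$, $S_i\leftarrow S_{i-1}\setminus U_1$; (3) local trimming: while there exists $u\in S_i$ with $w_u(S_i)<g(S_i)$, set $\tau_2=\max\{\tau_{\max},g(S_i)\}$,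 $U_2=\{u\in S_i: w_u(S_i)<\tau_2\}$, and $S_i\leftarrow S_i\setminus U_2$; (4) increase $i$ by one. The output is $\arg\max_{S_i}g(S_i)$ over the nonempty sets produced. *)

theory Defs
  imports Complex_Main
begin

definition simple_graph :: "'a set \<Rightarrow> 'a set set \<Rightarrow> bool" where
  "simple_graph V E \<longleftrightarrow> finite V \<and>
     (\<forall>e\<in>E. \<exists>x y. e = {x, y} \<and> x \<noteq> y \<and> x \<in> V \<and> y \<in> V)"

definition typeA_weight :: "'a set set \<Rightarrow> ('a \<Rightarrow> real) \<Rightarrow> ('a set \<Rightarrow> real) \<Rightarrow> 'a set \<Rightarrow> real" where
  "typeA_weight E a c S = (\<Sum>i\<in>S. a i) + (\<Sum>e\<in>{e\<in>E. e \<subseteq> S}. c e)"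

definition clique_count :: "'a set set \<Rightarrow> nat \<Rightarrow> 'a set \<Rightarrow> real" where
  "clique_count E k S = real (card {K. K \<subseteq> S \<and> card K = k \<and>
       (\<forall>x\<in>K. \<forall>y\<in>K. x \<noteq> y \<longrightarrow> {x, y} \<in> E)})"

definition density :: "('a set \<Rightarrow> real) \<Rightarrow> 'a set \<Rightarrow> real" where
  "density f S = f S / real (card S)"

definition peel_weight :: "('a set \<Rightarrow> real) \<Rightarrow> 'a set \<Rightarrow> 'a \<Rightarrow> real" where
  "peel_weight f S u = f S - f (S - {u})"

text \<open>Algorithm state: (in_main_phase, current set S, tau_max).
  A state with True is about to perform step (1)+(2) (the while-loop test and the main
  peeling step); a state with False is inside the local-trimming loop (3).
  One transition = one main peeling step, one local trimming step, or leaving the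
  trimming loop; the final state (True, {}, _) is a fixed point.\<close>
definition lpo_step :: "('a set \<Rightarrow> real) \<Rightarrow> nat \<Rightarrow> real \<Rightarrow> bool \<times> 'a set \<times> real \<Rightarrow> bool \<times> 'a set \<times> real" where
  "lpo_step f k \<epsilon> st = (case st of (main, S, tmax) \<Rightarrow>
     if main then
       (if S = {} then (True, S, tmax)
        else (let tmax' = max tmax (density f S / (real k * (1 + \<epsilon>)));
                  \<tau>1 = max tmax' (real k * (1 + \<epsilon>) * density f S)
              in (False, S - {u \<in> S. peel_weight f S u \<le> \<tau>1}, tmax')))
     else
       (if \<exists>u\<in>S. peel_weight f S u < density f S
        then (let \<tau>2 = max tmax (density f S)
              in (False, S - {u \<in> S. peel_weight f S u < \<tau>2}, tmax))
        else (True, S, tmax)))"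

definition lpo_run :: "('a set \<Rightarrow> real) \<Rightarrow> nat \<Rightarrow> real \<Rightarrow> 'a set \<Rightarrow> nat \<Rightarrow> bool \<times> 'a set \<times> real" where
  "lpo_run f k \<epsilon> V n = ((lpo_step f k \<epsilon>) ^^ n) (True, V, 0)"

end

theory Submission
  imports Defs
begin

definition good_fun :: "'a set \<Rightarrow> ('a set \<Rightarrow> real) \<Rightarrow> nat \<Rightarrow> bool" where
  "good_fun V f k \<longleftrightarrow> f {} = 0 \<and> (\<forall>S. S \<subseteq> V \<longrightarrow> f S \<ge> 0) \<and>
     (\<forall>A B u. A \<subseteq> B \<and> B \<subseteq> V \<and> u \<in> A \<longrightarrow> peel_weight f A u \<le> peel_weight f B u) \<and>
     (\<forall>S. S \<subseteq> V \<longrightarrow> (\<Sum>u\<in>S. peel_weight f S u) \<le> real k * f S)"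

lemma hyp_peel:
  fixes c :: "'a set \<Rightarrow> real"
  assumes "finite H"
  shows "(\<Sum>h\<in>{h\<in>H. h \<subseteq> S}. c h) - (\<Sum>h\<in>{h\<in>H. h \<subseteq> S - {u}}. c h)
         = (\<Sum>h\<in>{h\<in>H. h \<subseteq> S \<and> u \<in> h}. c h)"
proof -
  have e: "{h\<in>H. h \<subseteq> S} = {h\<in>H. h \<subseteq> S - {u}} \<union> {h\<in>H. h \<subseteq> S \<and> u \<in> h}" by blast
  have "(\<Sum>h\<in>{h\<in>H. h \<subseteq> S}. c h) = (\<Sum>h\<in>{h\<in>H. h \<subseteq> S - {u}}. c h) + (\<Sum>h\<in>{h\<in>H. h \<subseteq> S \<and> u \<in> h}. c h)"
    unfolding e by (rule sum.union_disjoint) (use assms in auto)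
  then show ?thesis by simp
qed

lemma hyp_good:
  fixes c :: "'a set \<Rightarrow> real"
  assumes V: "finite V" and H: "H \<subseteq> Pow V" and hk: "\<forall>h\<in>H. h \<noteq> {} \<and> card h \<le> k"
    and c: "\<forall>h\<in>H. c h \<ge> 0"
  shows "good_fun V (\<lambda>S. \<Sum>h\<in>{h\<in>H. h \<subseteq> S}. c h) k"
proof -
  have fH: "finite H" using V H by (meson finite_Pow_iff finite_subset)
  have pw: "peel_weight (\<lambda>S. \<Sum>h\<in>{h\<in>H. h \<subseteq> S}. c h) S u = (\<Sum>h\<in>{h\<in>H. h \<subseteq> S \<and> u \<in> h}. c h)" for S u
    unfolding peel_weight_def using hyp_peel[OF fH] by simp
  have z: "{h\<in>H. h \<subseteq> {}} = {}" using hk by auto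
  show ?thesis unfolding good_fun_def pw
  proof (intro conjI allI impI)
    show "(\<Sum>h\<in>{h\<in>H. h \<subseteq> {}}. c h) = 0" using z by (metis sum.empty)
  next
    fix S show "0 \<le> (\<Sum>h\<in>{h\<in>H. h \<subseteq> S}. c h)" using c by (auto intro: sum_nonneg)
  next
    fix A B u assume "A \<subseteq> B \<and> B \<subseteq> V \<and> u \<in> A"
    then show "(\<Sum>h\<in>{h\<in>H. h \<subseteq> A \<and> u \<in> h}. c h) \<le> (\<Sum>h\<in>{h\<in>H. h \<subseteq> B \<and> u \<in> h}. c h)"
      using c fH by (intro sum_mono2) auto
  next
    fix S assume SV: "S \<subseteq> V"
    have fS: "finite S" using SV V finite_subset by blast
    have "(\<Sum>u\<in>S. \<Sum>h\<in>{h\<in>H. h \<subseteq> S \<and> u \<in> h}. c h)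
        = (\<Sum>u\<in>S. \<Sum>h\<in>{h\<in>H. h \<subseteq> S}. if u \<in> h then c h else 0)"
    proof (rule sum.cong[OF refl])
      fix u
      have e: "{h\<in>H. h \<subseteq> S \<and> u \<in> h} = {h\<in>{h\<in>H. h \<subseteq> S}. u \<in> h}" by auto
      have "finite {h\<in>H. h \<subseteq> S}" using fH by simp
      then show "(\<Sum>h\<in>{h\<in>H. h \<subseteq> S \<and> u \<in> h}. c h) = (\<Sum>h\<in>{h\<in>H. h \<subseteq> S}. if u \<in> h then c h else 0)"
        unfolding e by (metis (no_types) sum.inter_filter)
    qed
    also have "\<dots> = (\<Sum>h\<in>{h\<in>H. h \<subseteq> S}. \<Sum>u\<in>S. if u \<in> h then c h else 0)"
      by (rule sum.swap)
    also have "\<dots> = (\<Sum>h\<in>{h\<in>H. h \<subseteq> S}. c h * real (card h))"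
    proof (rule sum.cong[OF refl])
      fix h assume "h \<in> {h\<in>H. h \<subseteq> S}"
      then have hS: "h \<subseteq> S" by auto
      have "(\<Sum>u\<in>S. if u \<in> h then c h else 0) = (\<Sum>u\<in>{u\<in>S. u \<in> h}. c h)"
        using sum.inter_filter[OF fS, of "\<lambda>_. c h" "\<lambda>u. u \<in> h"] by metis
      also have "{u\<in>S. u \<in> h} = h" using hS by auto
      finally show "(\<Sum>u\<in>S. if u \<in> h then c h else 0) = c h * real (card h)" by simp
    qed
    also have "\<dots> \<le> (\<Sum>h\<in>{h\<in>H. h \<subseteq> S}. real k * c h)"
    proof (rule sum_mono)
      fix h assume "h \<in> {h\<in>H. h \<subseteq> S}"
      then have "0 \<le> c h" "real (card h) \<le> real k" using c hk by auto
      then show "c h * real (card h) \<le> real k * c h" by (metis mult.commute mult_left_mono)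
    qed
    also have "\<dots> = real k * (\<Sum>h\<in>{h\<in>H. h \<subseteq> S}. c h)" by (simp add: sum_distrib_left)
    finally show "(\<Sum>u\<in>S. \<Sum>h\<in>{h\<in>H. h \<subseteq> S \<and> u \<in> h}. c h) \<le> real k * (\<Sum>h\<in>{h\<in>H. h \<subseteq> S}. c h)" .
  qed
qed

lemma vert_good:
  assumes V: "finite V" and a: "\<forall>i\<in>V. a i \<ge> 0"
  shows "good_fun V (\<lambda>S. \<Sum>i\<in>S. a i) 2"
proof -
  have pw: "peel_weight (\<lambda>S. \<Sum>i\<in>S. a i) S u = a u" if "S \<subseteq> V" "u \<in> S" for S u
  proof -
    have "finite S" using that V finite_subset by blast
    then show ?thesis unfolding peel_weight_def using that sum.remove[of S u a] by simp
  qed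
  show ?thesis unfolding good_fun_def
  proof (intro conjI allI impI)
    show "(\<Sum>i\<in>{}. a i) = 0" by simp
  next
    fix S :: "'a set" assume "S \<subseteq> V" then show "0 \<le> (\<Sum>i\<in>S. a i)" using a by (auto intro: sum_nonneg)
  next
    fix A B u assume h: "A \<subseteq> B \<and> B \<subseteq> V \<and> u \<in> A"
    then show "peel_weight (\<lambda>S. \<Sum>i\<in>S. a i) A u \<le> peel_weight (\<lambda>S. \<Sum>i\<in>S. a i) B u"
    proof -
      have "u \<in> B" "A \<subseteq> V" using h by auto
      then show ?thesis using pw[of A u] pw[of B u] h by auto
    qed
  next
    fix S :: "'a set" assume SV: "S \<subseteq> V"
    have "(\<Sum>u\<in>S. peel_weight (\<lambda>S. \<Sum>i\<in>S. a i) S u) = (\<Sum>u\<in>S. a u)"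
      using pw SV by (intro sum.cong) auto
    moreover have "0 \<le> (\<Sum>i\<in>S. a i)" using a SV by (auto intro: sum_nonneg)
    ultimately show "(\<Sum>u\<in>S. peel_weight (\<lambda>S. \<Sum>i\<in>S. a i) S u) \<le> real 2 * (\<Sum>i\<in>S. a i)" by simp
  qed
qed

lemma add_good:
  assumes "good_fun V f1 k" "good_fun V f2 k"
  shows "good_fun V (\<lambda>S. f1 S + f2 S) k"
proof -
  have pw: "peel_weight (\<lambda>S. f1 S + f2 S) S u = peel_weight f1 S u + peel_weight f2 S u" for S u
    unfolding peel_weight_def by simp
  show ?thesis using assms unfolding good_fun_def pw
    by (auto simp: sum.distrib distrib_left intro: add_mono add_nonneg_nonneg)
qed

lemma cong_good:
  assumes g: "good_fun V f k" and eq: "\<forall>S. S \<subseteq> V \<longrightarrow> f S = f' S"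
  shows "good_fun V f' k"
proof -
  have pw: "peel_weight f S u = peel_weight f' S u" if "S \<subseteq> V" for S u
  proof -
    have "S - {u} \<subseteq> V" using that by blast
    then show ?thesis unfolding peel_weight_def using eq that by simp
  qed
  have s: "(\<Sum>u\<in>S. peel_weight f S u) = (\<Sum>u\<in>S. peel_weight f' S u)" if "S \<subseteq> V" for S
    using pw[OF that] by simp
  show ?thesis unfolding good_fun_def
  proof (intro conjI allI impI)
    show "f' {} = 0" using g eq unfolding good_fun_def by auto
  next
    fix S :: "'a set" assume "S \<subseteq> V" then show "0 \<le> f' S" using g eq unfolding good_fun_def by auto
  next
    fix A B u assume h: "A \<subseteq> B \<and> B \<subseteq> V \<and> u \<in> A"
    then have "A \<subseteq> V" by blast
    have "peel_weight f A u \<le> peel_weight f B u" using g h unfolding good_fun_def by blast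
    then show "peel_weight f' A u \<le> peel_weight f' B u"
      using pw[OF \<open>A \<subseteq> V\<close>, of u] pw[of B u] h by simp
  next
    fix S :: "'a set" assume SV: "S \<subseteq> V"
    have "(\<Sum>u\<in>S. peel_weight f S u) \<le> real k * f S" using g SV unfolding good_fun_def by blast
    then show "(\<Sum>u\<in>S. peel_weight f' S u) \<le> real k * f' S"
      using s[OF SV] eq SV by simp
  qed
qed

lemma step_main:
  "S \<noteq> {} \<Longrightarrow> lpo_step f k \<epsilon> (True, S, t) =
    (False, S - {u \<in> S. peel_weight f S u \<le> max (max t (density f S / (real k * (1 + \<epsilon>)))) (real k * (1 + \<epsilon>) * density f S)},
     max t (density f S / (real k * (1 + \<epsilon>))))"
  by (simp add: lpo_step_def Let_def)

lemma step_empty: "lpo_step f k \<epsilon> (True, {}, t) = (True, {}, t)"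
  by (simp add: lpo_step_def)

lemma step_trim_yes:
  "\<exists>u\<in>S. peel_weight f S u < density f S \<Longrightarrow> lpo_step f k \<epsilon> (False, S, t) =
    (False, S - {u \<in> S. peel_weight f S u < max t (density f S)}, t)"
  by (simp add: lpo_step_def Let_def)

lemma step_trim_no:
  "\<not> (\<exists>u\<in>S. peel_weight f S u < density f S) \<Longrightarrow> lpo_step f k \<epsilon> (False, S, t) = (True, S, t)"
  by (simp add: lpo_step_def)

lemma step_mono: "fst (snd (lpo_step f k \<epsilon> st)) \<subseteq> fst (snd st)"
  by (cases st) (auto simp: lpo_step_def Let_def)

lemma run_Suc: "lpo_run f k \<epsilon> V (Suc n) = lpo_step f k \<epsilon> (lpo_run f k \<epsilon> V n)"
  by (simp add: lpo_run_def)

lemma run_0: "lpo_run f k \<epsilon> V 0 = (True, V, 0)"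
  by (simp add: lpo_run_def)

theorem lemma5p4:
  fixes V :: "'a set" and E :: "'a set set" and f :: "'a set \<Rightarrow> real"
    and k :: nat and \<epsilon> :: real and Sstar :: "'a set"
  assumes graph: "simple_graph V E"
    and weight: "(k = 2 \<and> (\<exists>a c. (\<forall>i\<in>V. a i \<ge> 0) \<and> (\<forall>e\<in>E. c e \<ge> 0) \<and>
                                  f = typeA_weight E a c))
               \<or> (k \<ge> 3 \<and> f = clique_count E k)"
    and eps: "\<epsilon> \<ge> 0"
    and Sstar_sub: "Sstar \<subseteq> V" and Sstar_ne: "Sstar \<noteq> {}"
    and Sstar_opt: "\<forall>S. S \<subseteq> V \<and> S \<noteq> {} \<longrightarrow> density f S \<le> density f Sstar"
  shows "(\<exists>n. Sstar \<subseteq> fst (snd (lpo_run f k \<epsilon> V n)) \<and>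
              \<not> Sstar \<subseteq> fst (snd (lpo_run f k \<epsilon> V (Suc n))))
       \<and> (\<forall>n. Sstar \<subseteq> fst (snd (lpo_run f k \<epsilon> V n)) \<and>
              \<not> Sstar \<subseteq> fst (snd (lpo_run f k \<epsilon> V (Suc n)))
              \<longrightarrow> fst (lpo_run f k \<epsilon> V n))"
proof -
  have fin: "finite V" using graph unfolding simple_graph_def by blast
  have ge: "\<forall>e\<in>E. \<exists>x y. e = {x, y} \<and> x \<noteq> y \<and> x \<in> V \<and> y \<in> V"
    using graph unfolding simple_graph_def by (rule conjunct2)
  have EV: "E \<subseteq> Pow V"
  proof
    fix e assume "e \<in> E"
    then obtain x y where "e = {x, y}" "x \<in> V" "y \<in> V" using ge by blast
    then show "e \<in> Pow V" by simp
  qed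
  have Ecard: "\<forall>e\<in>E. e \<noteq> {} \<and> card e \<le> 2"
  proof
    fix e assume "e \<in> E"
    then obtain x y where "e = {x, y}" "x \<noteq> y" using ge by blast
    then show "e \<noteq> {} \<and> card e \<le> 2" by simp
  qed
  have k1: "real k \<ge> 1" using weight by linarith
  have gf: "good_fun V f k"
    using weight
  proof
    assume A: "k = 2 \<and> (\<exists>a c. (\<forall>i\<in>V. a i \<ge> 0) \<and> (\<forall>e\<in>E. c e \<ge> 0) \<and> f = typeA_weight E a c)"
    then obtain a c where a: "\<forall>i\<in>V. a i \<ge> 0" and c: "\<forall>e\<in>E. c e \<ge> 0" and fe: "f = typeA_weight E a c" by blast
    have "good_fun V (\<lambda>S. (\<Sum>i\<in>S. a i) + (\<Sum>e\<in>{e\<in>E. e \<subseteq> S}. c e)) 2"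
      by (rule add_good[OF vert_good[OF fin a] hyp_good[OF fin EV Ecard c]])
    moreover have "f = (\<lambda>S. (\<Sum>i\<in>S. a i) + (\<Sum>e\<in>{e\<in>E. e \<subseteq> S}. c e))"
      unfolding fe typeA_weight_def by simp
    ultimately show ?thesis using A by simp
  next
    assume B: "k \<ge> 3 \<and> f = clique_count E k"
    define H where "H = {K. K \<subseteq> V \<and> card K = k \<and> (\<forall>x\<in>K. \<forall>y\<in>K. x \<noteq> y \<longrightarrow> {x, y} \<in> E)}"
    have HV: "H \<subseteq> Pow V" unfolding H_def by auto
    have Hc: "\<forall>h\<in>H. h \<noteq> {} \<and> card h \<le> k" using B unfolding H_def by auto
    have g1: "good_fun V (\<lambda>S. \<Sum>h\<in>{h\<in>H. h \<subseteq> S}. (\<lambda>_. 1::real) h) k"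
      by (rule hyp_good[OF fin HV Hc]) simp
    have "\<forall>S. S \<subseteq> V \<longrightarrow> (\<Sum>h\<in>{h\<in>H. h \<subseteq> S}. (\<lambda>_. 1::real) h) = f S"
    proof (intro allI impI)
      fix S assume SV: "S \<subseteq> V"
      have "{h\<in>H. h \<subseteq> S} = {K. K \<subseteq> S \<and> card K = k \<and> (\<forall>x\<in>K. \<forall>y\<in>K. x \<noteq> y \<longrightarrow> {x, y} \<in> E)}"
        unfolding H_def using SV by auto
      then show "(\<Sum>h\<in>{h\<in>H. h \<subseteq> S}. (\<lambda>_. 1::real) h) = f S"
        using B unfolding clique_count_def by simp
    qed
    then show ?thesis by (rule cong_good[OF g1])
  qed
  from gf have f0: "f {} = 0" and fnn: "\<And>S. S \<subseteq> V \<Longrightarrow> f S \<ge> 0"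
    and wmono: "\<And>A B u. A \<subseteq> B \<Longrightarrow> B \<subseteq> V \<Longrightarrow> u \<in> A \<Longrightarrow> peel_weight f A u \<le> peel_weight f B u"
    and wsum: "\<And>S. S \<subseteq> V \<Longrightarrow> (\<Sum>u\<in>S. peel_weight f S u) \<le> real k * f S"
    unfolding good_fun_def by blast+
  define gs where "gs = density f Sstar"
  have dnn: "density f S \<ge> 0" if "S \<subseteq> V" for S
    using fnn[OF that] unfolding density_def by simp
  have gsmax: "density f S \<le> gs" if "S \<subseteq> V" "S \<noteq> {}" for S
    using Sstar_opt that unfolding gs_def by blast
  have gs0: "gs \<ge> 0" unfolding gs_def using dnn Sstar_sub by blast
  have finS: "finite S" if "S \<subseteq> V" for S using fin that finite_subset by blast
  have fd: "f S = density f S * real (card S)" if "S \<subseteq> V" "S \<noteq> {}" for S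
  proof -
    have "card S > 0" using finS[OF that(1)] that(2) by (simp add: card_gt_0_iff)
    then show ?thesis unfolding density_def by simp
  qed
  have K1: "peel_weight f S u \<ge> gs" if u: "u \<in> Sstar" and SS: "Sstar \<subseteq> S" and SV: "S \<subseteq> V" for S u
  proof -
    have "peel_weight f Sstar u \<ge> gs"
    proof (cases "Sstar - {u} = {}")
      case True
      then have "Sstar = {u}" using u by blast
      then show ?thesis unfolding peel_weight_def gs_def density_def using f0 by simp
    next
      case False
      have fSs: "finite Sstar" using finS[OF Sstar_sub] .
      have cd: "card (Sstar - {u}) = card Sstar - 1" using u fSs by simp
      have c1: "card Sstar \<ge> 1" using fSs Sstar_ne by (simp add: Suc_le_eq card_gt_0_iff)
      have sub: "Sstar - {u} \<subseteq> V" using Sstar_sub by blast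
      have "density f (Sstar - {u}) \<le> gs" using gsmax[OF sub False] .
      then have "density f (Sstar - {u}) * real (card (Sstar - {u})) \<le> gs * real (card (Sstar - {u}))"
        by (rule mult_right_mono) simp
      then have "f (Sstar - {u}) \<le> gs * real (card (Sstar - {u}))"
        using fd[OF sub False] by simp
      also have "\<dots> = gs * real (card Sstar) - gs" using cd c1 by (simp add: of_nat_diff algebra_simps)
      finally have "f (Sstar - {u}) \<le> gs * real (card Sstar) - gs" .
      moreover have "f Sstar = gs * real (card Sstar)" using fd[OF Sstar_sub Sstar_ne] unfolding gs_def by simp
      ultimately show ?thesis unfolding peel_weight_def by simp
    qed
    also have "\<dots> \<le> peel_weight f S u" using wmono[OF SS SV u] .
    finally show ?thesis .
  qed
  have K2: "\<exists>u\<in>S. peel_weight f S u \<le> real k * density f S" if SV: "S \<subseteq> V" and Sne: "S \<noteq> {}" for S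
  proof (rule ccontr)
    assume "\<not> ?thesis"
    then have lt: "\<And>u. u \<in> S \<Longrightarrow> real k * density f S < peel_weight f S u" by force
    have "(\<Sum>u\<in>S. real k * density f S) < (\<Sum>u\<in>S. peel_weight f S u)"
      using sum_strict_mono[OF finS[OF SV] Sne lt] .
    also have "\<dots> \<le> real k * f S" using wsum[OF SV] .
    also have "\<dots> = (\<Sum>u\<in>S. real k * density f S)" using fd[OF SV Sne] by simp
    finally show False by simp
  qed
  define R where "R n = lpo_run f k \<epsilon> V n" for n
  have RS: "R (Suc n) = lpo_step f k \<epsilon> (R n)" for n unfolding R_def by (rule run_Suc)
  have R0: "R 0 = (True, V, 0)" unfolding R_def by (rule run_0)
  have kpos: "real k * (1 + \<epsilon>) \<ge> 1"
  proof -
    have "1 \<le> real k * 1" using k1 by simp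
    also have "\<dots> \<le> real k * (1 + \<epsilon>)" using eps k1 by (intro mult_left_mono) auto
    finally show ?thesis .
  qed
  have inv: "fst (snd (R n)) \<subseteq> V \<and> snd (snd (R n)) \<le> gs" for n
  proof (induction n)
    case 0 then show ?case using R0 gs0 by simp
  next
    case (Suc n)
    obtain b S t where Rn: "R n = (b, S, t)" by (cases "R n") auto
    have SV: "S \<subseteq> V" and tg: "t \<le> gs" using Suc Rn by auto
    show ?case
    proof (cases "b \<and> S \<noteq> {}")
      case True
      have d: "density f S \<le> gs" using gsmax[OF SV] True by blast
      have "density f S / (real k * (1 + \<epsilon>)) \<le> density f S"
        using dnn[OF SV] kpos by (simp add: divide_le_eq mult_le_cancel_left1 mult.commute order_trans)
      then show ?thesis using RS[of n] Rn True step_main[of S f k \<epsilon> t] SV tg d by auto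
    next
      case False
      then show ?thesis using RS[of n] Rn SV tg
        by (cases b) (auto simp: lpo_step_def Let_def)
    qed
  qed
  have mono: "fst (snd (R (Suc n))) \<subseteq> fst (snd (R n))" for n
    using RS[of n] step_mono by metis
  have trim: "Sstar \<subseteq> fst (snd (R (Suc n)))" if nb: "\<not> fst (R n)" and SS: "Sstar \<subseteq> fst (snd (R n))" for n
  proof -
    obtain b S t where Rn: "R n = (b, S, t)" by (cases "R n") auto
    have SV: "S \<subseteq> V" and tg: "t \<le> gs" using inv[of n] Rn by auto
    have b: "\<not> b" and SS': "Sstar \<subseteq> S" using nb SS Rn by auto
    show ?thesis
    proof (cases "\<exists>u\<in>S. peel_weight f S u < density f S")
      case True
      have "\<not> peel_weight f S u < max t (density f S)" if "u \<in> Sstar" for u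
      proof -
        have "S \<noteq> {}" using SS' Sstar_ne by blast
        then show ?thesis using K1[OF that SS' SV] tg gsmax[OF SV] by auto
      qed
      then show ?thesis using RS[of n] Rn b step_trim_yes[OF True, of k \<epsilon> t] SS' by auto
    next
      case False
      then show ?thesis using RS[of n] Rn b step_trim_no[OF False, of k \<epsilon> t] SS' by auto
    qed
  qed
  have mainstrict: "fst (snd (R (Suc m))) \<subset> S" if Rm: "R m = (True, S, t)" and Sne: "S \<noteq> {}" and SV: "S \<subseteq> V" for m S t
  proof -
    obtain u where u: "u \<in> S" and w: "peel_weight f S u \<le> real k * density f S" using K2[OF SV Sne] by blast
    define t' where "t' = max t (density f S / (real k * (1 + \<epsilon>)))"
    define T where "T = max t' (real k * (1 + \<epsilon>) * density f S)"
    have eq: "fst (snd (R (Suc m))) = S - {u \<in> S. peel_weight f S u \<le> T}"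
      unfolding RS Rm step_main[OF Sne] T_def t'_def by simp
    have "real k * density f S * 1 \<le> real k * density f S * (1 + \<epsilon>)"
      using dnn[OF SV] eps k1 by (intro mult_left_mono) auto
    then have "peel_weight f S u \<le> T" using w unfolding T_def by (simp add: algebra_simps)
    then show ?thesis unfolding eq using u by blast
  qed
  have prog: "fst (snd (R (Suc (Suc n)))) \<subset> fst (snd (R n))" if ne: "fst (snd (R n)) \<noteq> {}" for n
  proof -
    obtain b S t where Rn: "R n = (b, S, t)" by (cases "R n") auto
    have SV: "S \<subseteq> V" using inv[of n] Rn by auto
    have Sne: "S \<noteq> {}" using ne Rn by simp
    show ?thesis
    proof (cases b)
      case True
      then show ?thesis using mainstrict[of n S t] Rn Sne SV mono[of "Suc n"] by auto
    next
      case False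
      show ?thesis
      proof (cases "\<exists>u\<in>S. peel_weight f S u < density f S")
        case True
        then obtain u where u: "u \<in> S" "peel_weight f S u < density f S" by blast
        have "u \<notin> fst (snd (R (Suc n)))"
          using RS[of n] Rn False step_trim_yes[OF True, of k \<epsilon> t] u by auto
        then have "fst (snd (R (Suc n))) \<subset> S" using mono[of n] Rn u by auto
        then show ?thesis using mono[of "Suc n"] Rn by auto
      next
        case nt: False
        have "R (Suc n) = (True, S, t)" using RS[of n] Rn False step_trim_no[OF nt, of k \<epsilon> t] by simp
        then show ?thesis using mainstrict[of "Suc n" S t] Sne SV Rn by simp
      qed
    qed
  qed
  have cnt: "fst (snd (R (2 * m))) = {} \<or> card (fst (snd (R (2 * m)))) + m \<le> card V" for m
  proof (induction m)
    case 0 then show ?case using R0 by simp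
  next
    case (Suc m)
    have e: "2 * Suc m = Suc (Suc (2 * m))" by simp
    show ?case
    proof (cases "fst (snd (R (2 * m))) = {}")
      case True
      then show ?thesis using mono[of "2 * m"] mono[of "Suc (2 * m)"] unfolding e by auto
    next
      case False
      have "card (fst (snd (R (Suc (Suc (2 * m)))))) < card (fst (snd (R (2 * m))))"
        using prog[OF False] inv[of "2 * m"] finS by (meson psubset_card_mono)
      then show ?thesis using Suc False unfolding e by auto
    qed
  qed
  have "fst (snd (R (2 * Suc (card V)))) = {}" using cnt[of "Suc (card V)"] by auto
  then have ex: "\<exists>N. \<not> Sstar \<subseteq> fst (snd (R N))" using Sstar_ne by blast
  define N where "N = (LEAST N. \<not> Sstar \<subseteq> fst (snd (R N)))"
  have N1: "\<not> Sstar \<subseteq> fst (snd (R N))" unfolding N_def using LeastI_ex[OF ex] .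
  have N2: "Sstar \<subseteq> fst (snd (R m))" if "m < N" for m
    using not_less_Least[of m "\<lambda>N. \<not> Sstar \<subseteq> fst (snd (R N))"] that unfolding N_def by blast
  have "N \<noteq> 0" using N1 R0 Sstar_sub by auto
  then obtain n where Nn: "N = Suc n" using not0_implies_Suc by blast
  have part1: "\<exists>n. Sstar \<subseteq> fst (snd (R n)) \<and> \<not> Sstar \<subseteq> fst (snd (R (Suc n)))"
    using N1 N2[of n] Nn by auto
  have part2: "\<forall>n. Sstar \<subseteq> fst (snd (R n)) \<and> \<not> Sstar \<subseteq> fst (snd (R (Suc n))) \<longrightarrow> fst (R n)"
    using trim by blast
  show ?thesis using part1 part2 unfolding R_def by simp
qed

end
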